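(* Let $R\in\mathcal L(\mathcal H)$, $u,v\in\mathcal H$, $T=R+(\cdot,v)u$, $V\in\mathcal L(\mathcal K)$, and $Y\in\mathcal L(\mathcal K,\mathcal H)$ with $\ker Y=\{0\}$ and $TY=YV$. If $v$ is a cyclic vector for $R^\ast$, then $Y^\ast v$ is a cyclic vector for $V^\ast$.
   Context: $(\cdot,v)u$ denotes $x\mapsto(x,v)u$. A vector $x$ is cyclic for an operator $A$ if the closed linear span of $\{A^nx:n\geq0\}$ is the whole space. *)

theory Defs
  imports "HOL-Analysis.Analysis"
begin

class chilbert_space = banach +
  fixes cscale :: "complex \<Rightarrow> 'a \<Rightarrow> 'a"
    and cinner :: "'a \<Rightarrow> 'a \<Rightarrow> complex"
  assumes cscale_add_right: "cscale c (x + y) = cscale c x + cscale c y"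
    and cscale_add_left: "cscale (a + b) x = cscale a x + cscale b x"
    and cscale_cscale: "cscale a (cscale b x) = cscale (a * b) x"
    and cscale_of_real: "cscale (complex_of_real r) x = scaleR r x"
    and cinner_add_left: "cinner (x + y) z = cinner x z + cinner y z"
    and cinner_cscale_left: "cinner (cscale c x) y = c * cinner x y"
    and cinner_commute: "cinner y x = cnj (cinner x y)"
    and cinner_self_norm: "cinner x x = complex_of_real ((norm x)\<^sup>2)"

definition cbounded_linear :: "('a::chilbert_space \<Rightarrow> 'b::chilbert_space) \<Rightarrow> bool" where
  "cbounded_linear f \<longleftrightarrow> bounded_linear f \<and> (\<forall>c x. f (cscale c x) = cscale c (f x))"

definition is_adjoint :: "('a::chilbert_space \<Rightarrow> 'b::chilbert_space) \<Rightarrow> ('b \<Rightarrow> 'a) \<Rightarrow> bool" where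
  "is_adjoint A B \<longleftrightarrow> (\<forall>x y. cinner (A x) y = cinner x (B y))"

definition cyclic_vector :: "('a::chilbert_space \<Rightarrow> 'a) \<Rightarrow> 'a \<Rightarrow> bool" where
  "cyclic_vector A x \<longleftrightarrow>
     closure {(\<Sum>n<N. cscale (c n) ((A ^^ n) x)) | N c. True} = UNIV"

end

theory Submission
  imports Defs
begin

lemma cscale_zero_left[simp]: "cscale 0 x = 0"
  using cscale_of_real[of 0 x] by simp
lemma cscale_one[simp]: "cscale 1 x = x"
  using cscale_of_real[of 1 x] by simp
lemma cscale_zero_right[simp]: "cscale c 0 = 0"
  using cscale_add_right[of c 0 0] by simp
lemma cscale_minus_right: "cscale c (- x) = - cscale c x"
  using cscale_add_right[of c x "-x"] by (simp add: eq_neg_iff_add_eq_0 add.commute)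
lemma cscale_diff_right: "cscale c (x - y) = cscale c x - cscale c y"
  using cscale_add_right[of c x "-y"] by (simp add: cscale_minus_right)
lemma cinner_zero_left[simp]: "cinner 0 y = 0"
  using cinner_add_left[of 0 0 y] by simp
lemma cinner_minus_left: "cinner (- x) y = - cinner x y"
  using cinner_add_left[of x "-x" y] by (simp add: eq_neg_iff_add_eq_0 add.commute)
lemma cinner_diff_left: "cinner (x - y) z = cinner x z - cinner y z"
  using cinner_add_left[of x "-y" z] by (simp add: cinner_minus_left)
lemma cinner_add_right: "cinner x (y + z) = cinner x y + cinner x z"
  by (metis cinner_commute cinner_add_left complex_cnj_add)
lemma cinner_cscale_right: "cinner x (cscale c y) = cnj c * cinner x y"
  by (metis cinner_commute cinner_cscale_left complex_cnj_mult)
lemma cinner_zero_right[simp]: "cinner x 0 = 0"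
  by (metis cinner_commute cinner_zero_left complex_cnj_zero)
lemma cinner_diff_right: "cinner x (y - z) = cinner x y - cinner x z"
  by (metis cinner_commute cinner_diff_left complex_cnj_diff)
lemma re_cinner_self: "Re (cinner x x) = (norm x)^2"
  using cinner_self_norm[of x] by simp
lemma cinner_self_eq_0: "cinner x x = 0 \<longleftrightarrow> x = 0"
  using cinner_self_norm[of x] by simp
lemma norm_add_sq: "(norm (a + b))^2 = (norm a)^2 + (norm b)^2 + 2 * Re (cinner a b)"
proof -
  have "cinner (a+b) (a+b) = cinner a a + cinner b b + (cinner a b + cnj (cinner a b))"
    by (simp add: cinner_add_left cinner_add_right cinner_commute[of a b])
  hence "Re (cinner (a+b) (a+b)) = Re (cinner a a) + Re (cinner b b) + 2 * Re (cinner a b)"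
    by simp
  thus ?thesis by (simp add: re_cinner_self)
qed
lemma norm_diff_sq: "(norm (a - b))^2 = (norm a)^2 + (norm b)^2 - 2 * Re (cinner a b)"
  using norm_add_sq[of a "-b"] cinner_diff_right[of a 0 b] by simp

lemma norm_cscale: "norm (cscale c x) = cmod c * norm x"
proof -
  have "cinner (cscale c x) (cscale c x) = (c * cnj c) * cinner x x"
    by (simp add: cinner_cscale_left cinner_cscale_right)
  also have "... = complex_of_real ((cmod c * norm x)^2)"
    using complex_norm_square[of c] by (simp add: cinner_self_norm power_mult_distrib)
  finally have "complex_of_real ((norm (cscale c x))^2) = complex_of_real ((cmod c * norm x)^2)"
    by (simp only: cinner_self_norm)
  hence "(norm (cscale c x))^2 = (cmod c * norm x)^2" by (simp only: of_real_eq_iff)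
  thus ?thesis by (simp add: power2_eq_imp_eq)
qed

lemma cinner_ext: "(\<And>k. cinner k a = cinner k b) \<Longrightarrow> a = b"
  by (metis cinner_diff_right cinner_self_eq_0 eq_iff_diff_eq_0)

lemma infdist_lessE: "A \<noteq> {} \<Longrightarrow> infdist x A < e \<Longrightarrow> \<exists>a\<in>A. dist x a < e"
  using infdist_notempty cINF_less_iff[of A "dist x" e]
  by (metis bdd_belowI2 zero_le_dist)

lemma projection_orth:
  fixes M :: "'a::chilbert_space set"
  assumes M0: "0 \<in> M" and Madd: "\<forall>a\<in>M. \<forall>b\<in>M. a + b \<in> M"
    and Mscale: "\<forall>c. \<forall>a\<in>M. cscale c a \<in> M" and z: "z \<notin> closure M"
  shows "\<exists>x. x \<noteq> 0 \<and> (\<forall>m\<in>M. cinner m x = 0)"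
proof -
  define d where "d = infdist z M"
  have Mne: "M \<noteq> {}" using M0 by auto
  have d0: "d > 0" using z in_closure_iff_infdist_zero[OF Mne] infdist_nonneg[of z M]
    unfolding d_def by force
  have low: "d \<le> norm (z - a)" if "a \<in> M" for a
    using infdist_le[OF that, of z] by (simp add: d_def dist_norm)
  have "\<exists>a\<in>M. (norm (z - a))^2 < d^2 + inverse (real (Suc n))" for n
  proof -
    have "d < sqrt (d^2 + inverse (real (Suc n)))"
      using d0 by (simp add: real_less_rsqrt)
    then obtain a where a: "a \<in> M" "dist z a < sqrt (d^2 + inverse (real (Suc n)))"
      using infdist_lessE[OF Mne] unfolding d_def by blast
    have "(dist z a)^2 < (sqrt (d^2 + inverse (real (Suc n))))^2"
      using a(2) by (intro power_strict_mono) auto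
    also have "... = d^2 + inverse (real (Suc n))" by simp
    finally show ?thesis using a(1) by (auto simp: dist_norm)
  qed
  then obtain m where mM: "\<And>n. m n \<in> M"
    and mb: "\<And>n. (norm (z - m n))^2 < d^2 + inverse (real (Suc n))"
    by metis
  have mid: "(norm (m k - m n))^2 \<le> 2 * inverse (real (Suc n)) + 2 * inverse (real (Suc k))" for n k
  proof -
    define a where "a = z - m n"
    define b where "b = z - m k"
    define q where "q = cscale (complex_of_real (1/2)) (m n + m k)"
    have qM: "q \<in> M" using Madd Mscale mM unfolding q_def by blast
    have "a + b = 2 *\<^sub>R (z - q)"
      unfolding a_def b_def q_def cscale_of_real by (simp add: algebra_simps scaleR_2)
    hence nab: "norm (a + b) = 2 * norm (z - q)" by simp
    have "2 * d \<le> norm (a + b)" using nab low[OF qM] by simp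
    hence "(2*d)^2 \<le> (norm (a+b))^2" using d0 by (intro power_mono) auto
    moreover have "(norm (a+b))^2 + (norm (a - b))^2 = 2*(norm a)^2 + 2*(norm b)^2"
      using norm_add_sq[of a b] norm_diff_sq[of a b] by simp
    moreover have "a - b = m k - m n" unfolding a_def b_def by simp
    ultimately show ?thesis using mb[of n] mb[of k] unfolding a_def b_def
      by (simp add: power_mult_distrib)
  qed
  have "Cauchy m"
  proof (rule CauchyI)
    fix e :: real assume e: "0 < e"
    obtain N where N: "inverse (real (Suc N)) < e^2 / 4"
      using reals_Archimedean[of "e^2/4"] e by auto
    have "norm (m i - m j) < e" if "i \<ge> N" "j \<ge> N" for i j
    proof -
      have "inverse (real (Suc i)) \<le> inverse (real (Suc N))"
        "inverse (real (Suc j)) \<le> inverse (real (Suc N))" using that by (auto simp: field_simps)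
      hence "(norm (m i - m j))^2 < e^2" using mid[of i j] N by linarith
      thus ?thesis using e by (simp add: power_less_imp_less_base)
    qed
    thus "\<exists>M. \<forall>m'\<ge>M. \<forall>n\<ge>M. norm (m m' - m n) < e" by blast
  qed
  then obtain p where p: "m \<longlonglongrightarrow> p" unfolding Cauchy_convergent_iff convergent_def by blast
  have pcl: "p \<in> closure M" unfolding closure_sequential using p mM by blast
  have l1: "(\<lambda>n. (norm (z - m n))^2) \<longlonglongrightarrow> (norm (z - p))^2"
    by (rule tendsto_power[OF tendsto_norm[OF tendsto_diff[OF tendsto_const p]]])
  have l2: "(\<lambda>n. d^2 + inverse (real (Suc n))) \<longlonglongrightarrow> d^2 + 0"
    by (rule tendsto_add[OF tendsto_const LIMSEQ_inverse_real_of_nat])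
  have "(norm (z - p))^2 \<le> d^2 + 0"
    by (rule LIMSEQ_le[OF l1 l2]) (use mb less_imp_le in blast)
  hence "(norm (z - p))^2 \<le> d^2" by simp
  hence pd: "norm (z - p) \<le> d" using d0 power2_le_imp_le[of "norm (z - p)" d] by linarith
  define x where "x = z - p"
  have x0: "x \<noteq> 0" using pcl z unfolding x_def by auto
  have var: "norm x \<le> norm (x - cscale t m0)" if "m0 \<in> M" for t m0
  proof -
    have lim: "(\<lambda>n. norm (z - (m n + cscale t m0))) \<longlonglongrightarrow> norm (z - (p + cscale t m0))"
      by (intro tendsto_intros p)
    have lb: "d \<le> norm (z - (m n + cscale t m0))" for n
      using low Madd Mscale mM that by blast
    have "d \<le> norm (z - (p + cscale t m0))"
      using LIMSEQ_le_const[OF lim, of d] lb by blast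
    thus ?thesis using pd unfolding x_def by (simp add: algebra_simps)
  qed
  have "\<forall>m0\<in>M. cinner m0 x = 0"
  proof
    fix m0 assume m0: "m0 \<in> M"
    show "cinner m0 x = 0"
    proof (cases "m0 = 0")
      case True thus ?thesis by simp
    next
      case False
      define c where "c = cinner x m0"
      define s where "s = inverse ((norm m0)^2)"
      have s0: "s > 0" using False by (simp add: s_def)
      define t where "t = complex_of_real s * c"
      have "(norm x)^2 \<le> (norm (x - cscale t m0))^2"
        using var[OF m0, of t] by (simp add: power_mono)
      also have "... = (norm x)^2 + (s * cmod c * norm m0)^2 - 2 * (s * (cmod c)^2)"
      proof -
        have "cnj t * c = complex_of_real (s * (cmod c)^2)"
          using complex_norm_square[of c] by (simp add: t_def mult.commute)
        hence e1: "Re (cinner x (cscale t m0)) = s * (cmod c)^2"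
          by (simp add: cinner_cscale_right c_def)
        have e2: "norm (cscale t m0) = s * cmod c * norm m0"
          by (simp add: norm_cscale t_def norm_mult abs_of_pos s0)
        show ?thesis using norm_diff_sq[of x "cscale t m0"] unfolding e1 e2 .
      qed
      finally have "0 \<le> (s * cmod c * norm m0)^2 - 2 * (s * (cmod c)^2)" by simp
      also have "(s * cmod c * norm m0)^2 = s * (cmod c)^2"
        using False by (simp add: s_def power_mult_distrib field_simps)
      finally have "(cmod c)^2 \<le> 0" using s0 by (simp add: mult_le_0_iff)
      hence "c = 0" by simp
      thus ?thesis by (metis c_def cinner_commute complex_cnj_zero)
    qed
  qed
  thus ?thesis using x0 by blast
qed


lemma cinner_polar:
  "cinner h w = complex_of_real (((norm (h + w))^2 - (norm h)^2 - (norm w)^2) / 2)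
     + \<i> * complex_of_real (((norm (h + cscale \<i> w))^2 - (norm h)^2 - (norm w)^2) / 2)"
proof -
  have r: "Re (cinner h w) = ((norm (h + w))^2 - (norm h)^2 - (norm w)^2) / 2"
    using norm_add_sq[of h w] by simp
  have "Re (cinner h (cscale \<i> w)) = Im (cinner h w)"
    by (simp add: cinner_cscale_right)
  moreover have "norm (cscale \<i> w) = norm w" by (simp add: norm_cscale)
  ultimately have i: "Im (cinner h w) = ((norm (h + cscale \<i> w))^2 - (norm h)^2 - (norm w)^2) / 2"
    using norm_add_sq[of h "cscale \<i> w"] by simp
  show ?thesis using complex_eq[of "cinner h w"] unfolding r i .
qed

lemma closed_orth: "closed {h::'a::chilbert_space. cinner h w = 0}"
proof -
  have "{h::'a. cinner h w = 0} = {h. complex_of_real (((norm (h + w))^2 - (norm h)^2 - (norm w)^2) / 2)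
     + \<i> * complex_of_real (((norm (h + cscale \<i> w))^2 - (norm h)^2 - (norm w)^2) / 2) = 0}"
    by (subst cinner_polar) (rule refl)
  also have "closed ..."
    by (intro closed_Collect_eq continuous_intros) auto
  finally show ?thesis .
qed

lemma adj_add: "is_adjoint A B \<Longrightarrow> B (a + b) = B a + B b"
  unfolding is_adjoint_def by (intro cinner_ext) (metis cinner_add_right)

lemma adj_scale: "is_adjoint A B \<Longrightarrow> B (cscale c a) = cscale c (B a)"
  unfolding is_adjoint_def by (intro cinner_ext) (metis cinner_cscale_right)

lemma adj_sym: "is_adjoint A B \<Longrightarrow> cinner (B a) b = cinner a (A b)"
  unfolding is_adjoint_def by (metis cinner_commute)

definition csub :: "'a::chilbert_space set \<Rightarrow> bool" where
  "csub P \<longleftrightarrow> 0 \<in> P \<and> (\<forall>a\<in>P. \<forall>b\<in>P. a + b \<in> P) \<and> (\<forall>c. \<forall>a\<in>P. cscale c a \<in> P)"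

lemma csub_sum: "csub P \<Longrightarrow> (\<And>n. f n \<in> P) \<Longrightarrow> (\<Sum>n<(N::nat). cscale (c n) (f n)) \<in> P"
  unfolding csub_def by (induction N) auto

lemma cscale_sum: "cscale a (\<Sum>n<(N::nat). f n) = (\<Sum>n<N. cscale a (f n))"
  by (induction N) (auto simp: cscale_add_right)

lemma sum_ext0:
  assumes "N1 \<le> (N::nat)"
  shows "(\<Sum>n<N. cscale (if n < N1 then c n else 0) (g n)) = (\<Sum>n<N1. cscale (c n) (g n))"
  by (rule sum.mono_neutral_cong_right) (use assms in auto)

definition Span :: "('a::chilbert_space \<Rightarrow> 'a) \<Rightarrow> 'a \<Rightarrow> 'a set" where
  "Span A x = {(\<Sum>n<N. cscale (c n) ((A ^^ n) x)) | N c. True}"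

lemma in_SpanI: "y = (\<Sum>n<N. cscale (c n) ((A ^^ n) x)) \<Longrightarrow> y \<in> Span A x"
  unfolding Span_def by blast

lemma csub_Span: "csub (Span A x)"
  unfolding csub_def
proof (intro conjI ballI allI)
  show "0 \<in> Span A x" unfolding Span_def by (auto intro: exI[of _ 0])
next
  fix a b assume "a \<in> Span A x" "b \<in> Span A x"
  then obtain N1 c1 N2 c2 where a: "a = (\<Sum>n<N1. cscale (c1 n) ((A ^^ n) x))"
    and b: "b = (\<Sum>n<N2. cscale (c2 n) ((A ^^ n) x))" unfolding Span_def by blast
  define c where "c n = (if n < N1 then c1 n else 0) + (if n < N2 then c2 n else 0)" for n
  have "(\<Sum>n<N1+N2. cscale (c n) ((A ^^ n) x)) =
     (\<Sum>n<N1+N2. cscale (if n < N1 then c1 n else 0) ((A ^^ n) x)) +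
     (\<Sum>n<N1+N2. cscale (if n < N2 then c2 n else 0) ((A ^^ n) x))"
    unfolding c_def cscale_add_left sum.distrib ..
  also have "... = a + b" unfolding a b by (simp add: sum_ext0)
  finally have "a + b = (\<Sum>n<N1+N2. cscale (c n) ((A ^^ n) x))" by simp
  thus "a + b \<in> Span A x" unfolding Span_def by blast
next
  fix k a assume "a \<in> Span A x"
  then obtain N c where a: "a = (\<Sum>n<N. cscale (c n) ((A ^^ n) x))" unfolding Span_def by blast
  have "cscale k a = (\<Sum>n<N. cscale (k * c n) ((A ^^ n) x))"
    unfolding a cscale_sum by (simp add: cscale_cscale)
  thus "cscale k a \<in> Span A x" by (rule in_SpanI)
qed

lemma in_Span: "(A ^^ n) x \<in> Span A x"
proof -
  have "(\<Sum>k<Suc n. cscale (if k = n then 1 else 0) ((A ^^ k) x)) = (A ^^ n) x"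
    by (simp add: sum.neutral)
  thus ?thesis by (intro in_SpanI) (rule sym)
qed

lemma funpow_lin:
  fixes f :: "'a::chilbert_space \<Rightarrow> 'a"
  assumes "\<And>a b. f (a + b) = f a + f b" "\<And>c a. f (cscale c a) = cscale c (f a)"
  shows "(f ^^ n) (a + b) = (f ^^ n) a + (f ^^ n) b \<and> (f ^^ n) (cscale c a) = cscale c ((f ^^ n) a)"
  by (induction n) (auto simp: assms)

theorem corollary7p8:
  fixes R Rs :: "'h::chilbert_space \<Rightarrow> 'h" and u v :: 'h
    and V Vs :: "'k::chilbert_space \<Rightarrow> 'k"
    and Y :: "'k \<Rightarrow> 'h" and Ys :: "'h \<Rightarrow> 'k"
  assumes "cbounded_linear R" and "is_adjoint R Rs"
    and "cbounded_linear V" and "is_adjoint V Vs"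
    and "cbounded_linear Y" and "is_adjoint Y Ys"
    and "\<forall>x. Y x = 0 \<longrightarrow> x = 0"
    and "\<forall>x. (let T = (\<lambda>y. R y + cscale (cinner y v) u) in T (Y x)) = Y (V x)"
    and "cyclic_vector Rs v"
  shows "cyclic_vector Vs (Ys v)"
proof (rule ccontr)
  note adjR = assms(2) and adjV = assms(4) and adjY = assms(6)
  assume nc: "\<not> cyclic_vector Vs (Ys v)"
  then obtain z where z: "z \<notin> closure (Span Vs (Ys v))"
    unfolding cyclic_vector_def Span_def by blast
  have cs: "csub (Span Vs (Ys v))" by (rule csub_Span)
  obtain x where x0: "x \<noteq> 0" and xo: "\<forall>m\<in>Span Vs (Ys v). cinner m x = 0"
    using projection_orth[OF _ _ _ z] cs unfolding csub_def by blast
  define Ts where "Ts y = Rs y + cscale (cinner y u) v" for y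
  define w where "w = Y x"
  have Tadj: "cinner (R y + cscale (cinner y v) u) h = cinner y (Ts h)" for y h
    using adjR unfolding Ts_def is_adjoint_def
    by (simp add: cinner_add_left cinner_add_right cinner_cscale_left cinner_cscale_right
        cinner_commute[of h u])
  have TsY: "Ys (Ts h) = Vs (Ys h)" for h
  proof (rule cinner_ext)
    fix k
    have "cinner k (Ys (Ts h)) = cinner (Y k) (Ts h)" using adjY unfolding is_adjoint_def by simp
    also have "... = cinner (R (Y k) + cscale (cinner (Y k) v) u) h" by (rule Tadj[symmetric])
    also have "... = cinner (Y (V k)) h" using assms(8) by (simp add: Let_def)
    also have "... = cinner (V k) (Ys h)" using adjY unfolding is_adjoint_def by simp
    also have "... = cinner k (Vs (Ys h))" using adjV unfolding is_adjoint_def by simp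
    finally show "cinner k (Ys (Ts h)) = cinner k (Vs (Ys h))" .
  qed
  have pow: "Ys ((Ts ^^ n) v) = (Vs ^^ n) (Ys v)" for n
    by (induction n) (simp_all add: TsY)
  have orth: "cinner ((Ts ^^ n) v) w = 0" for n
  proof -
    have "cinner ((Ts ^^ n) v) w = cinner (Ys ((Ts ^^ n) v)) x"
      unfolding w_def using adj_sym[OF adjY] by simp
    also have "... = 0" unfolding pow using xo in_Span by blast
    finally show ?thesis .
  qed
  have Tsadd: "Ts (a + b) = Ts a + Ts b" for a b
    unfolding Ts_def by (simp add: adj_add[OF adjR] cinner_add_left cscale_add_left algebra_simps)
  have Tsscale: "Ts (cscale c a) = cscale c (Ts a)" for c a
    unfolding Ts_def by (simp add: adj_scale[OF adjR] cinner_cscale_left cscale_add_right cscale_cscale)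
  note TL = funpow_lin[of Ts, OF Tsadd Tsscale]
  have T0: "(Ts ^^ n) 0 = 0" for n using TL[of n 0 0 0] by simp
  define O2 where "O2 = {h. \<forall>n. cinner ((Ts ^^ n) h) w = 0}"
  have csO2: "csub O2"
    unfolding csub_def O2_def using TL T0 by (auto simp: cinner_add_left cinner_cscale_left)
  have vO2: "v \<in> O2" unfolding O2_def using orth by blast
  have TsO2: "Ts h \<in> O2" if "h \<in> O2" for h
  proof -
    have "cinner ((Ts ^^ n) (Ts h)) w = 0" for n
    proof -
      have "cinner ((Ts ^^ Suc n) h) w = 0" using that unfolding O2_def by blast
      thus ?thesis by (simp add: funpow_swap1)
    qed
    thus ?thesis unfolding O2_def by simp
  qed
  have RsO2: "Rs h \<in> O2" if "h \<in> O2" for h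
  proof -
    have "Rs h = Ts h + cscale (- cinner h u) v"
      unfolding Ts_def using cscale_add_left[of "cinner h u" "- cinner h u" v]
      by (simp add: eq_neg_iff_add_eq_0 add.commute)
    moreover have "cscale (- cinner h u) v \<in> O2" using csO2 vO2 unfolding csub_def by blast
    ultimately show ?thesis using csO2 TsO2[OF that] unfolding csub_def by simp
  qed
  have RnO2: "(Rs ^^ n) v \<in> O2" for n
    by (induction n) (auto simp: vO2 RsO2)
  have "Span Rs v \<subseteq> {h. cinner h w = 0}"
  proof
    fix h assume "h \<in> Span Rs v"
    then obtain N c where "h = (\<Sum>n<N. cscale (c n) ((Rs ^^ n) v))" unfolding Span_def by blast
    hence "h \<in> O2" using csub_sum[OF csO2 RnO2] by simp
    thus "h \<in> {h. cinner h w = 0}" unfolding O2_def by (metis funpow_0 mem_Collect_eq)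
  qed
  hence "closure (Span Rs v) \<subseteq> {h. cinner h w = 0}"
    using closed_orth closure_minimal by blast
  moreover have "closure (Span Rs v) = UNIV"
    using assms(9) unfolding cyclic_vector_def Span_def .
  ultimately have "cinner w w = 0" by blast
  hence "Y x = 0" unfolding w_def by (simp add: cinner_self_eq_0)
  thus False using assms(7) x0 by blast
qed

end
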